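(* Let $\{t_k\}_{k\ge1}$ and $\{\xi_k\}_{k\ge1}$ be two sequences in $[1,+\infty)$. Assume that $\{t_k^2\xi_k\}$ is nondecreasing, $t_k^2\xi_k\to+\infty$, and $t_{k+1}^2\xi_{k+1}-t_k^2\xi_k\le\rho t_{k+1}\xi_{k+1}$ for all $k\ge1$, for some $0<\rho\le1$. Then $\sum_{k=1}^{+\infty}\frac1{t_k}=+\infty$. *)

theory Defs
  imports "HOL-Analysis.Analysis"
begin

end

theory Submission
  imports Defs
begin

theorem lemmaA6:
  fixes t xi :: "nat \<Rightarrow> real" and \<rho> :: real
  assumes t_ge: "\<And>k. k \<ge> 1 \<Longrightarrow> t k \<ge> 1"
    and xi_ge: "\<And>k. k \<ge> 1 \<Longrightarrow> xi k \<ge> 1"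
    and mono: "\<And>k. k \<ge> 1 \<Longrightarrow> (t k)\<^sup>2 * xi k \<le> (t (Suc k))\<^sup>2 * xi (Suc k)"
    and lim: "filterlim (\<lambda>k. (t k)\<^sup>2 * xi k) at_top sequentially"
    and rho: "0 < \<rho>" "\<rho> \<le> 1"
    and step: "\<And>k. k \<ge> 1 \<Longrightarrow>
       (t (Suc k))\<^sup>2 * xi (Suc k) - (t k)\<^sup>2 * xi k \<le> \<rho> * t (Suc k) * xi (Suc k)"
  shows "\<not> summable (\<lambda>k. 1 / t (Suc k))"
proof
  assume S: "summable (\<lambda>k. 1 / t (Suc k))"
  define a where "a k = (t k)\<^sup>2 * xi k" for k
  have apos: "a k \<ge> 1" if "k \<ge> 1" for k
  proof -
    have "(t k)\<^sup>2 \<ge> 1" using t_ge[OF that] by (simp add: one_le_power)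
    then show ?thesis unfolding a_def using xi_ge[OF that]
      by (metis mult_mono' mult_1_right order_trans zero_le_one)
  qed
  have amono: "a k \<le> a j" if "1 \<le> k" "k \<le> j" for k j
    using that(2)
  proof (induction j rule: dec_induct)
    case base then show ?case by simp
  next
    case (step j) then show ?case using mono[of j] that(1) unfolding a_def by linarith
  qed
  have key: "(a (Suc k) - a k) / a (Suc k) \<le> 1 / t (Suc k)" if "k \<ge> 1" for k
  proof -
    have t1: "t (Suc k) \<ge> 1" and x1: "xi (Suc k) \<ge> 1" using t_ge xi_ge by auto
    have "a (Suc k) - a k \<le> \<rho> * t (Suc k) * xi (Suc k)" using step[OF that] unfolding a_def .
    also have "\<dots> \<le> t (Suc k) * xi (Suc k)" using rho t1 x1 by simp
    also have "\<dots> = a (Suc k) / t (Suc k)" using t1 unfolding a_def by (simp add: power2_eq_square)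
    finally have "a (Suc k) - a k \<le> a (Suc k) / t (Suc k)" .
    moreover have "a (Suc k) > 0" using apos[of "Suc k"] by simp
    ultimately show ?thesis using t1 by (simp add: divide_simps mult.commute)
  qed
  obtain N where N: "\<And>m n. m \<ge> N \<Longrightarrow> norm (sum (\<lambda>k. 1 / t (Suc k)) {m..<n}) < 1/2"
  proof -
    have "\<forall>e>0. \<exists>N. \<forall>m\<ge>N. \<forall>n. norm (sum (\<lambda>k. 1 / t (Suc k)) {m..<n}) < e"
      using S unfolding summable_Cauchy .
    then have "\<exists>N. \<forall>m\<ge>N. \<forall>n. norm (sum (\<lambda>k. 1 / t (Suc k)) {m..<n}) < 1/2"
      by (meson divide_pos_pos zero_less_one zero_less_numeral)
    then show ?thesis using that by blast
  qed
  define n where "n = max N 1"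
  have n1: "n \<ge> 1" "n \<ge> N" unfolding n_def by auto
  have "\<forall>\<^sub>F k in sequentially. a k \<ge> 2 * a n"
    using lim unfolding a_def filterlim_at_top by blast
  then obtain M where M: "\<And>k. k \<ge> M \<Longrightarrow> a k \<ge> 2 * a n"
    unfolding eventually_sequentially by blast
  define m where "m = max M n"
  have m: "m \<ge> n" "a m \<ge> 2 * a n" using M unfolding m_def by auto
  have anpos: "a n \<ge> 1" using apos n1 by auto
  have ampos: "a m > 0" using m anpos by linarith
  have "(a m - a n) / a m = (\<Sum>k\<in>{n..<m}. (a (Suc k) - a k)) / a m"
    using sum_Suc_diff'[OF m(1), of a] by simp
  also have "\<dots> = (\<Sum>k\<in>{n..<m}. (a (Suc k) - a k) / a m)"
    by (simp add: sum_divide_distrib)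
  also have "\<dots> \<le> (\<Sum>k\<in>{n..<m}. 1 / t (Suc k))"
  proof (rule sum_mono)
    fix k assume k: "k \<in> {n..<m}"
    then have k1: "k \<ge> 1" using n1 by auto
    have d: "a (Suc k) - a k \<ge> 0" using amono[of k "Suc k"] k1 by simp
    have p: "a (Suc k) > 0" using apos[of "Suc k"] by simp
    have le: "a (Suc k) \<le> a m" using amono[of "Suc k" m] k by auto
    have "(a (Suc k) - a k) / a m \<le> (a (Suc k) - a k) / a (Suc k)"
      using d p le by (simp add: divide_left_mono)
    then show "(a (Suc k) - a k) / a m \<le> 1 / t (Suc k)" using key[OF k1] by linarith
  qed
  also have "\<dots> < 1/2" using N[OF n1(2), of m] by simp
  finally have "(a m - a n) / a m < 1/2" .
  moreover have "(a m - a n) / a m \<ge> 1/2" using m ampos by (simp add: divide_simps)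
  ultimately show False by linarith
qed

end
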